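(* For every $N\ge2$, the set $\mathbb{S}_N\setminus\{\mathrm{id}\}$ is a union of pairwise disjoint subsets, each of which is either (a) a single permutation $\sigma$ for which there is an entry $\beta$ with $\sigma(\beta+1)=\beta$ and all entries of $\sigma$ in positions after $\beta+1$ greater than $\beta$; or (b) a pair $\{\sigma,\sigma'\}$ of permutations that differ only by an interchange of two adjacent entries $\alpha,\beta$, such that some entry $\gamma$ with $\gamma<\alpha$ and $\gamma<\beta$ appears to the right of $\alpha$ and $\beta$.
   Context: Permutations are written in one-line notation $\sigma(1)\sigma(2)\cdots\sigma(N)$, and "position $k$" refers to the $k$-th entry $\sigma(k)$. *)

theory Defs
  imports "HOL-Combinatorics.Permutations" "HOL-Library.Disjoint_Sets"
begin

text \<open>Permutations of {1..N} are functions \<sigma> with \<sigma> permutes {1..N};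
  position k holds the entry \<sigma> k.\<close>

definition typeA :: "nat \<Rightarrow> (nat \<Rightarrow> nat) \<Rightarrow> bool" where
  "typeA N \<sigma> \<longleftrightarrow> (\<exists>b. 1 \<le> b \<and> b + 1 \<le> N \<and> \<sigma> (b + 1) = b \<and>
      (\<forall>k. b + 1 < k \<and> k \<le> N \<longrightarrow> \<sigma> k > b))"

definition typeB :: "nat \<Rightarrow> (nat \<Rightarrow> nat) \<Rightarrow> (nat \<Rightarrow> nat) \<Rightarrow> bool" where
  "typeB N \<sigma> \<sigma>' \<longleftrightarrow> (\<exists>i. 1 \<le> i \<and> i + 1 \<le> N \<and>
      \<sigma>' i = \<sigma> (i + 1) \<and> \<sigma>' (i + 1) = \<sigma> i \<and>
      (\<forall>k. k \<noteq> i \<and> k \<noteq> i + 1 \<longrightarrow> \<sigma>' k = \<sigma> k) \<and>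
      (\<exists>j. i + 1 < j \<and> j \<le> N \<and> \<sigma> j < \<sigma> i \<and> \<sigma> j < \<sigma> (i + 1)))"

end

theory Submission
  imports Defs
begin

definition mm :: "(nat \<Rightarrow> nat) \<Rightarrow> nat" where "mm \<sigma> = (LEAST k. \<sigma> k \<noteq> k)"
definition pp :: "(nat \<Rightarrow> nat) \<Rightarrow> nat" where "pp \<sigma> = inv \<sigma> (mm \<sigma>)"
definition gg :: "(nat \<Rightarrow> nat) \<Rightarrow> (nat \<Rightarrow> nat)" where
  "gg \<sigma> = (if mm \<sigma> + 2 \<le> pp \<sigma> then \<sigma> \<circ> Transposition.transpose (pp \<sigma> - 2) (pp \<sigma> - 1) else \<sigma>)"

locale pm =
  fixes N :: nat and \<sigma> :: "nat \<Rightarrow> nat"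
  assumes perm: "\<sigma> permutes {1..N}" and nid: "\<sigma> \<noteq> id"
begin

lemma ex: "\<exists>k. \<sigma> k \<noteq> k" using nid by (auto simp: fun_eq_iff)

lemma mm1: "\<sigma> (mm \<sigma>) \<noteq> mm \<sigma>" unfolding mm_def using ex by (rule LeastI_ex)

lemma mm2: "k < mm \<sigma> \<Longrightarrow> \<sigma> k = k" unfolding mm_def using not_less_Least by blast

lemma inj: "inj \<sigma>" using permutes_inj[OF perm] .

lemma ge: "mm \<sigma> \<le> k \<Longrightarrow> mm \<sigma> \<le> \<sigma> k"
proof (rule ccontr)
  assume a: "mm \<sigma> \<le> k" "\<not> mm \<sigma> \<le> \<sigma> k"
  then have "\<sigma> (\<sigma> k) = \<sigma> k" using mm2 by simp
  then have "\<sigma> k = k" using inj by (simp add: inj_eq)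
  then show False using a by simp
qed

lemma pp1: "\<sigma> (pp \<sigma>) = mm \<sigma>" unfolding pp_def using permutes_inverses(1)[OF perm] .

lemma pp_eq: "\<sigma> k = mm \<sigma> \<Longrightarrow> k = pp \<sigma>" using inj pp1 by (metis injD)

lemma pp_gt: "mm \<sigma> < pp \<sigma>"
proof -
  have "pp \<sigma> \<noteq> mm \<sigma>" using pp1 mm1 by metis
  moreover have "\<not> pp \<sigma> < mm \<sigma>" using mm2 pp1 by (metis less_irrefl)
  ultimately show ?thesis by simp
qed

lemma in_range: "\<sigma> k \<noteq> k \<Longrightarrow> 1 \<le> k \<and> k \<le> N"
  using permutes_not_in[OF perm] by fastforce

lemma pp_le: "pp \<sigma> \<le> N" using in_range[of "pp \<sigma>"] pp1 pp_gt by simp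
lemma mm_ge: "1 \<le> mm \<sigma>" using in_range[OF mm1] by simp

lemma typeA_case: "\<not> mm \<sigma> + 2 \<le> pp \<sigma> \<Longrightarrow> typeA N \<sigma>"
  unfolding typeA_def
proof (intro exI[of _ "mm \<sigma>"] conjI allI impI)
  assume h: "\<not> mm \<sigma> + 2 \<le> pp \<sigma>"
  then have pe: "pp \<sigma> = mm \<sigma> + 1" using pp_gt by simp
  show "1 \<le> mm \<sigma>" by (rule mm_ge)
  show "mm \<sigma> + 1 \<le> N" using pp_le pe by simp
  show "\<sigma> (mm \<sigma> + 1) = mm \<sigma>" using pp1 pe by simp
  fix k assume "mm \<sigma> + 1 < k \<and> k \<le> N"
  then have "mm \<sigma> \<le> \<sigma> k" "\<sigma> k \<noteq> mm \<sigma>" using ge pp_eq pe by auto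
  then show "mm \<sigma> < \<sigma> k" by simp
qed

context
  assumes big: "mm \<sigma> + 2 \<le> pp \<sigma>"
begin

abbreviation "\<tau> \<equiv> \<sigma> \<circ> Transposition.transpose (pp \<sigma> - 2) (pp \<sigma> - 1)"

lemma g_eq: "gg \<sigma> = \<tau>" unfolding gg_def using big by simp

lemma tau_perm: "\<tau> permutes {1..N}"
  using big pp_le mm_ge
  by (intro permutes_compose[OF _ perm] permutes_swap_id) auto

lemma tau_other: "k \<noteq> pp \<sigma> - 2 \<Longrightarrow> k \<noteq> pp \<sigma> - 1 \<Longrightarrow> \<tau> k = \<sigma> k"
  by (simp add: transpose_apply_other)

lemma tau_ne: "\<tau> \<noteq> \<sigma>"
proof
  assume "\<tau> = \<sigma>"
  then have "\<tau> (pp \<sigma> - 2) = \<sigma> (pp \<sigma> - 2)" by simp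
  then have "\<sigma> (pp \<sigma> - 1) = \<sigma> (pp \<sigma> - 2)" by simp
  then show False using inj big by (metis injD diff_less_mono2 less_irrefl numeral_2_eq_2 One_nat_def
      lessI Suc_le_eq add_leD2 le_less_trans zero_less_Suc)
qed

lemma tau_nid: "\<tau> \<noteq> id"
proof
  assume "\<tau> = id"
  then have "\<tau> (pp \<sigma>) = pp \<sigma>" by simp
  moreover have "\<tau> (pp \<sigma>) = \<sigma> (pp \<sigma>)" using big by (intro tau_other) auto
  ultimately show False using pp1 pp_gt by simp
qed

lemma tau_mm: "mm \<tau> = mm \<sigma>"
proof -
  have a: "\<tau> k = k" if "k < mm \<sigma>" for k
    using that big mm2[OF that] by (subst tau_other) auto
  have b: "\<tau> (mm \<sigma>) \<noteq> mm \<sigma>"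
  proof (cases "mm \<sigma> = pp \<sigma> - 2")
    case True
    then have "\<tau> (mm \<sigma>) = \<sigma> (pp \<sigma> - 1)" by simp
    moreover have "pp \<sigma> - 1 \<noteq> pp \<sigma>" using big by simp
    then have "\<sigma> (pp \<sigma> - 1) \<noteq> mm \<sigma>" using pp_eq by blast
    ultimately show ?thesis by simp
  next
    case False
    then have "mm \<sigma> \<noteq> pp \<sigma> - 1" using big by auto
    then show ?thesis using False mm1 tau_other by simp
  qed
  show ?thesis unfolding mm_def[of \<tau>]
  proof (rule Least_equality[where P="\<lambda>k. \<tau> k \<noteq> k", OF b])
    fix y assume "\<tau> y \<noteq> y"
    then show "mm \<sigma> \<le> y" using a not_le by blast
  qed
qed

lemma tau_pp: "pp \<tau> = pp \<sigma>"
proof -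
  have h: "\<tau> (pp \<sigma>) = mm \<sigma>" using big pp1 by (subst tau_other) auto
  have "inv \<tau> (mm \<sigma>) = pp \<sigma>" using permutes_inv_eq[OF tau_perm] h by blast
  moreover have "pp \<tau> = inv \<tau> (mm \<tau>)" by (rule pp_def)
  ultimately show "pp \<tau> = pp \<sigma>" using tau_mm by simp
qed

lemma tau_typeB: "typeB N \<sigma> \<tau>"
  unfolding typeB_def
proof (rule exI[of _ "pp \<sigma> - 2"], intro conjI allI impI)
  show "1 \<le> pp \<sigma> - 2" using big mm_ge by simp
  show "pp \<sigma> - 2 + 1 \<le> N" using big pp_le by simp
  have e: "pp \<sigma> - 2 + 1 = pp \<sigma> - 1" using big by simp
  show "\<tau> (pp \<sigma> - 2) = \<sigma> (pp \<sigma> - 2 + 1)" using e by simp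
  show "\<tau> (pp \<sigma> - 2 + 1) = \<sigma> (pp \<sigma> - 2)" using e by simp
  show "\<tau> k = \<sigma> k" if "k \<noteq> pp \<sigma> - 2 \<and> k \<noteq> pp \<sigma> - 2 + 1" for k
  proof -
    have k1: "k \<noteq> pp \<sigma> - 2" "k \<noteq> pp \<sigma> - 1" using that e by auto
    show ?thesis by (rule tau_other[OF k1])
  qed
  have n1: "pp \<sigma> - 2 \<noteq> pp \<sigma>" "pp \<sigma> - 1 \<noteq> pp \<sigma>" "mm \<sigma> \<le> pp \<sigma> - 2" "mm \<sigma> \<le> pp \<sigma> - 1"
    using big by auto
  have 1: "mm \<sigma> \<le> \<sigma> (pp \<sigma> - 2)" "\<sigma> (pp \<sigma> - 2) \<noteq> mm \<sigma>"
  proof -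
    show "mm \<sigma> \<le> \<sigma> (pp \<sigma> - 2)" by (rule ge[OF n1(3)])
    show "\<sigma> (pp \<sigma> - 2) \<noteq> mm \<sigma>"
    proof
      assume "\<sigma> (pp \<sigma> - 2) = mm \<sigma>"
      then have "pp \<sigma> - 2 = pp \<sigma>" by (rule pp_eq)
      with n1(1) show False by simp
    qed
  qed
  have 2: "mm \<sigma> \<le> \<sigma> (pp \<sigma> - 1)" "\<sigma> (pp \<sigma> - 1) \<noteq> mm \<sigma>"
  proof -
    show "mm \<sigma> \<le> \<sigma> (pp \<sigma> - 1)" by (rule ge[OF n1(4)])
    show "\<sigma> (pp \<sigma> - 1) \<noteq> mm \<sigma>"
    proof
      assume "\<sigma> (pp \<sigma> - 1) = mm \<sigma>"
      then have "pp \<sigma> - 1 = pp \<sigma>" by (rule pp_eq)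
      with n1(2) show False by simp
    qed
  qed
  show "\<exists>j. pp \<sigma> - 2 + 1 < j \<and> j \<le> N \<and> \<sigma> j < \<sigma> (pp \<sigma> - 2) \<and> \<sigma> j < \<sigma> (pp \<sigma> - 2 + 1)"
  proof (intro exI[of _ "pp \<sigma>"] conjI)
    show "pp \<sigma> - 2 + 1 < pp \<sigma>" using big by simp
    show "pp \<sigma> \<le> N" by (rule pp_le)
    show "\<sigma> (pp \<sigma>) < \<sigma> (pp \<sigma> - 2)" using 1 pp1 by simp
    show "\<sigma> (pp \<sigma>) < \<sigma> (pp \<sigma> - 2 + 1)" using 2 pp1 e by simp
  qed
qed

end

lemma gg_in: "gg \<sigma> permutes {1..N} \<and> gg \<sigma> \<noteq> id"
proof (cases "mm \<sigma> + 2 \<le> pp \<sigma>")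
  case True
  then show ?thesis using tau_perm[OF True] tau_nid[OF True] g_eq[OF True] by simp
next
  case False
  then show ?thesis using perm nid by (simp add: gg_def)
qed

lemma gg_inv: "gg (gg \<sigma>) = \<sigma>"
proof (cases "mm \<sigma> + 2 \<le> pp \<sigma>")
  case True
  have "gg (gg \<sigma>) = \<tau> \<circ> Transposition.transpose (pp \<sigma> - 2) (pp \<sigma> - 1)"
    unfolding g_eq[OF True] gg_def[of "\<tau>"] tau_mm[OF True] tau_pp[OF True] using True by simp
  also have "\<dots> = \<sigma>" by (simp add: comp_assoc)
  finally show ?thesis .
next
  case False
  then show ?thesis by (simp add: gg_def)
qed

lemma block: "(\<exists>\<rho>. {\<sigma>, gg \<sigma>} = {\<rho>} \<and> typeA N \<rho>) \<or> (\<exists>\<rho> \<rho>'. {\<sigma>, gg \<sigma>} = {\<rho>, \<rho>'} \<and> typeB N \<rho> \<rho>')"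
proof (cases "mm \<sigma> + 2 \<le> pp \<sigma>")
  case True
  show ?thesis
  proof (rule disjI2, intro exI conjI)
    show "{\<sigma>, gg \<sigma>} = {\<sigma>, \<tau>}" using g_eq[OF True] by simp
    show "typeB N \<sigma> \<tau>" using tau_typeB[OF True] .
  qed
next
  case False
  show ?thesis
  proof (rule disjI1, rule exI[of _ \<sigma>], rule conjI)
    show "{\<sigma>, gg \<sigma>} = {\<sigma>}" using False by (simp add: gg_def)
    show "typeA N \<sigma>" using typeA_case[OF False] .
  qed
qed

end

theorem lemma3p9:
  fixes N :: nat
  assumes "N \<ge> 2"
  shows "\<exists>P. partition_on {\<sigma>. \<sigma> permutes {1..N} \<and> \<sigma> \<noteq> id} P \<and>
    (\<forall>B\<in>P. (\<exists>\<sigma>. B = {\<sigma>} \<and> typeA N \<sigma>) \<or>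
            (\<exists>\<sigma> \<sigma>'. B = {\<sigma>, \<sigma>'} \<and> typeB N \<sigma> \<sigma>'))"
proof -
  let ?S = "{\<sigma>. \<sigma> permutes {1..N} \<and> \<sigma> \<noteq> id}"
  let ?P = "(\<lambda>\<sigma>. {\<sigma>, gg \<sigma>}) ` ?S"
  have pmI: "\<sigma> \<in> ?S \<Longrightarrow> pm N \<sigma>" for \<sigma> by (simp add: pm_def)
  have inS: "\<sigma> \<in> ?S \<Longrightarrow> gg \<sigma> \<in> ?S" for \<sigma>
    using pm.gg_in[OF pmI] by simp
  have inv: "\<sigma> \<in> ?S \<Longrightarrow> gg (gg \<sigma>) = \<sigma>" for \<sigma>
    using pm.gg_inv[OF pmI] .
  have sw: "{a, gg a} = {x, gg x}" if "a \<in> ?S" "x \<in> {a, gg a}" for a x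
  proof -
    from that(2) have "x = a \<or> x = gg a" by simp
    then show ?thesis
    proof
      assume "x = gg a"
      then have "gg x = a" using inv[OF that(1)] by simp
      then show ?thesis using \<open>x = gg a\<close> by (simp add: insert_commute)
    qed simp
  qed
  have "partition_on ?S ?P"
  proof (rule partition_onI)
    show "\<Union> ?P = ?S"
    proof
      show "\<Union> ?P \<subseteq> ?S"
      proof
        fix x assume "x \<in> \<Union> ?P"
        then obtain X where X: "X \<in> ?P" "x \<in> X" by (rule UnionE)
        obtain \<sigma> where s: "X = {\<sigma>, gg \<sigma>}" "\<sigma> \<in> ?S" using X(1) by (rule imageE)
        have "x = \<sigma> \<or> x = gg \<sigma>" using X(2) s(1) by simp
        then show "x \<in> ?S" using s(2) inS[OF s(2)] by (elim disjE) simp_all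
      qed
      show "?S \<subseteq> \<Union> ?P"
      proof
        fix x assume x: "x \<in> ?S"
        have "{x, gg x} \<in> ?P" using x by (rule imageI)
        moreover have "x \<in> {x, gg x}" by simp
        ultimately show "x \<in> \<Union> ?P" by (rule UnionI)
      qed
    qed
    show "{} \<notin> ?P"
    proof
      assume "{} \<in> ?P"
      then obtain \<sigma> where "{} = {\<sigma>, gg \<sigma>}" "\<sigma> \<in> ?S" by (rule imageE)
      then show False by simp
    qed
    fix p q assume pq: "p \<in> ?P" "q \<in> ?P" "p \<noteq> q"
    obtain a where a: "p = {a, gg a}" "a \<in> ?S" using pq(1) by (rule imageE)
    obtain b where b: "q = {b, gg b}" "b \<in> ?S" using pq(2) by (rule imageE)
    have ab: "a \<in> ?S" "b \<in> ?S" "p = {a, gg a}" "q = {b, gg b}" "p \<noteq> q"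
      using a b pq(3) by simp_all
    show "disjnt p q"
      unfolding disjnt_def
    proof (rule ccontr)
      assume "p \<inter> q \<noteq> {}"
      then obtain x where "x \<in> p" "x \<in> q" by blast
      then have "x \<in> {a, gg a}" "x \<in> {b, gg b}" using ab(3,4) by simp_all
      then have e1: "{a, gg a} = {x, gg x}" and e2: "{b, gg b} = {x, gg x}"
        using sw[OF ab(1)] sw[OF ab(2)] by blast+
      have "p = q" unfolding ab(3,4) e1 e2 ..
      with ab(5) show False by contradiction
    qed
  qed
  moreover have "\<forall>B\<in>?P. (\<exists>\<sigma>. B = {\<sigma>} \<and> typeA N \<sigma>) \<or> (\<exists>\<sigma> \<sigma>'. B = {\<sigma>, \<sigma>'} \<and> typeB N \<sigma> \<sigma>')"
  proof
    fix B assume "B \<in> ?P"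
    then obtain \<sigma> where "B = {\<sigma>, gg \<sigma>}" "\<sigma> \<in> ?S" by (rule imageE)
    then show "(\<exists>\<sigma>. B = {\<sigma>} \<and> typeA N \<sigma>) \<or> (\<exists>\<sigma> \<sigma>'. B = {\<sigma>, \<sigma>'} \<and> typeB N \<sigma> \<sigma>')"
      using pm.block[OF pmI] by simp
  qed
  ultimately show ?thesis by blast
qed

end
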